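(* For all integers $0<i<j$, $Q^i<Q^j$ as unifiers of $[1]p$ in $\mathbf{GLP}$, where $Q^i$ denotes the substitution $p\mapsto Q^i(p)$; that is, $Q^i\leq Q^j$ but not $Q^j\leq Q^i$.
   Context: $\mathbf{GLP}$ is the propositional polymodal logic with modalities $[0],[1],\dots$ ($\langle k\rangle:=\neg[k]\neg$) axiomatized by classical tautologies; $[k](\phi\to\psi)\to([k]\phi\to[k]\psi)$; $[k]([k]\phi\to\phi)\to[k]\phi$; $\langle j\rangle\phi\to[k]\langle j\rangle\phi$ for $j<k$; $[j]\phi\to[k]\phi$ for $j\leq k$; rules modus ponens and necessitation. A substitution commutes with all connectives and modalities. $\tau\leq\sigma$ means there is a substitution $\theta$ with $\mathbf{GLP}\vdash\tau(q)\leftrightarrow\theta(\sigma(q))$ for every variable $q$; $\sigma<\tau$ means $\sigma\leq\tau$ and not $\tau\leq\sigma$. Define $Q_1(p):=p$, $Q_{i+1}(p):=p\lor[0]Q_i(p)$, $Q^n(p):=\bigwedge_{i=1}^n([0]Q_i(p)\to Q_i(p))$. *)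

theory Defs
  imports Main
begin

datatype form = Var nat | Bot | Imp form form | Box nat form

definition Neg :: "form \<Rightarrow> form" where "Neg a = Imp a Bot"
definition Top :: form where "Top = Imp Bot Bot"
definition Or :: "form \<Rightarrow> form \<Rightarrow> form" where "Or a b = Imp (Neg a) b"
definition And :: "form \<Rightarrow> form \<Rightarrow> form" where "And a b = Neg (Imp a (Neg b))"
definition Iff :: "form \<Rightarrow> form \<Rightarrow> form" where "Iff a b = And (Imp a b) (Imp b a)"
definition Dia :: "nat \<Rightarrow> form \<Rightarrow> form" where "Dia k a = Neg (Box k (Neg a))"

fun peval :: "(form \<Rightarrow> bool) \<Rightarrow> form \<Rightarrow> bool" where
  "peval v (Var n) = v (Var n)"
| "peval v Bot = False"
| "peval v (Imp a b) = (peval v a \<longrightarrow> peval v b)"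
| "peval v (Box k a) = v (Box k a)"

definition taut :: "form \<Rightarrow> bool" where "taut a \<longleftrightarrow> (\<forall>v. peval v a)"

inductive GLP :: "form \<Rightarrow> bool" where
  tautology: "taut a \<Longrightarrow> GLP a"
| K: "GLP (Imp (Box k (Imp a b)) (Imp (Box k a) (Box k b)))"
| Loeb: "GLP (Imp (Box k (Imp (Box k a) a)) (Box k a))"
| neg_intro: "j < k \<Longrightarrow> GLP (Imp (Dia j a) (Box k (Dia j a)))"
| mono: "j \<le> k \<Longrightarrow> GLP (Imp (Box j a) (Box k a))"
| MP: "GLP (Imp a b) \<Longrightarrow> GLP a \<Longrightarrow> GLP b"
| Nec: "GLP a \<Longrightarrow> GLP (Box k a)"

type_synonym subst = "nat \<Rightarrow> form"

fun subst_app :: "subst \<Rightarrow> form \<Rightarrow> form" where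
  "subst_app s (Var n) = s n"
| "subst_app s Bot = Bot"
| "subst_app s (Imp a b) = Imp (subst_app s a) (subst_app s b)"
| "subst_app s (Box k a) = Box k (subst_app s a)"

definition subst_le :: "subst \<Rightarrow> subst \<Rightarrow> bool" where
  "subst_le \<tau> \<sigma> \<longleftrightarrow> (\<exists>\<theta>. \<forall>q. GLP (Iff (\<tau> q) (subst_app \<theta> (\<sigma> q))))"

definition subst_less :: "subst \<Rightarrow> subst \<Rightarrow> bool" where
  "subst_less \<sigma> \<tau> \<longleftrightarrow> subst_le \<sigma> \<tau> \<and> \<not> subst_le \<tau> \<sigma>"

text \<open>The distinguished variable p is \<open>Var 0\<close>.\<close>

fun Qi :: "nat \<Rightarrow> form \<Rightarrow> form" where
  "Qi 0 p = p"   \<comment> \<open>unused index; only \<open>Qi i\<close> for \<open>i \<ge> 1\<close> matters\<close>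
| "Qi (Suc 0) p = p"
| "Qi (Suc (Suc i)) p = Or p (Box 0 (Qi (Suc i) p))"

fun Qup :: "nat \<Rightarrow> form \<Rightarrow> form" where
  "Qup 0 p = Top"
| "Qup (Suc n) p = And (Qup n p) (Imp (Box 0 (Qi (Suc n) p)) (Qi (Suc n) p))"

definition Qsubst :: "nat \<Rightarrow> subst" where
  "Qsubst n = (\<lambda>q. if q = 0 then Qup n (Var 0) else Var q)"

end

theory Submission
  imports Defs
begin

lemma peval_simps[simp]:
  "peval v (Neg a) = (\<not> peval v a)"
  "peval v Top = True"
  "peval v (Or a b) = (peval v a \<or> peval v b)"
  "peval v (And a b) = (peval v a \<and> peval v b)"
  "peval v (Iff a b) = (peval v a = peval v b)"
  by (auto simp: Neg_def Top_def Or_def And_def Iff_def)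

lemma taut_consL:
  "(\<forall>h\<in>set hs. GLP h) \<Longrightarrow> (\<And>v. (\<forall>h\<in>set hs. peval v h) \<Longrightarrow> peval v c) \<Longrightarrow> GLP c"
proof (induction hs arbitrary: c)
  case Nil
  then show ?case by (auto intro: GLP.tautology simp: taut_def)
next
  case (Cons h hs)
  have "GLP (Imp h c)"
    using Cons.prems by (intro Cons.IH) auto
  then show ?case using Cons.prems(1) by (auto intro: GLP.MP)
qed

lemma box_mono: "GLP (Imp a b) \<Longrightarrow> GLP (Imp (Box k a) (Box k b))"
  by (rule GLP.MP[OF GLP.K], rule GLP.Nec)

lemma box_K: "GLP (Imp (Box k (Imp a b)) (Imp (Box k a) (Box k b)))"
  by (rule GLP.K)

lemma L0: "peval v p \<Longrightarrow> peval v (Qi k p)"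
  by (induction k p rule: Qi.induct) auto

lemma L1: "GLP (Imp (Qi k p) (Qi (Suc k) p))"
proof (induction k)
  case 0
  show ?case by (rule taut_consL[of "[]"]) auto
next
  case (Suc k)
  show ?case
  proof (cases k)
    case 0
    then show ?thesis by (intro taut_consL[of "[]"]) auto
  next
    case (Suc k')
    have h: "GLP (Imp (Box 0 (Qi k p)) (Box 0 (Qi (Suc k) p)))"
      using box_mono[OF Suc.IH] .
    show ?thesis
      by (rule taut_consL[of "[Imp (Box 0 (Qi k p)) (Box 0 (Qi (Suc k) p))]"])
         (use h Suc in auto)
  qed
qed

lemma imp_trans: "GLP (Imp a b) \<Longrightarrow> GLP (Imp b c) \<Longrightarrow> GLP (Imp a c)"
  by (rule taut_consL[of "[Imp a b, Imp b c]"]) auto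

lemma imp_refl: "GLP (Imp a a)"
  by (rule taut_consL[of "[]"]) auto

lemma L1m: "k \<le> m \<Longrightarrow> GLP (Imp (Qi k p) (Qi m p))"
proof (induction m)
  case 0 then show ?case by (auto intro: imp_refl)
next
  case (Suc m)
  then show ?case
    by (cases "k = Suc m") (auto intro: imp_refl imp_trans[OF _ L1])
qed

lemma L2: "GLP (Imp a b) \<Longrightarrow> GLP (Imp (Qi k a) (Qi k b))"
proof (induction k a rule: Qi.induct)
  case (1 p) then show ?case by simp
next
  case (2 p) then show ?case by simp
next
  case (3 i p)
  have h: "GLP (Imp (Box 0 (Qi (Suc i) p)) (Box 0 (Qi (Suc i) b)))"
    using box_mono[OF 3(1)[OF 3(2)]] .
  show ?case
    by (rule taut_consL[of "[Imp (Box 0 (Qi (Suc i) p)) (Box 0 (Qi (Suc i) b)), Imp p b]"])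
       (use h 3(2) in auto)
qed

lemma T1: "1 \<le> n \<Longrightarrow> peval v (Box 0 (Qi n p)) \<Longrightarrow> \<not> peval v p \<Longrightarrow> \<not> peval v (Qup n p)"
proof (induction n)
  case 0 then show ?case by simp
next
  case (Suc n)
  show ?case
  proof (cases n)
    case 0 then show ?thesis using Suc.prems by simp
  next
    case (Suc n')
    then show ?thesis using Suc.IH Suc.prems by auto
  qed
qed

lemma Qup_L0: "peval v p \<Longrightarrow> peval v (Qup n p)"
  by (induction n) (auto intro: L0)

lemma Qup_prefix: "i \<le> j \<Longrightarrow> peval v (Qup j p) \<Longrightarrow> peval v (Qup i p)"
proof (induction j)
  case 0 then show ?case by simp
next
  case (Suc j) then show ?case by (cases "i = Suc j") auto
qed

lemma M:
  assumes "1 \<le> i" "1 \<le> m"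
  shows "GLP (Imp (Qi (Suc i) p) (Imp (Qi m (Qup i p)) (Qi m p)))"
  using assms(2)
proof (induction m rule: nat_induct_at_least)
  case base
  obtain i' where i': "i = Suc i'" using assms(1) by (cases i) auto
  show ?case
    by (rule taut_consL[of "[]"]) (use T1[of i _ p] assms(1) i' in auto)
next
  case (Suc m)
  obtain i' where i': "i = Suc i'" using assms(1) by (cases i) auto
  obtain m' where m': "m = Suc m'" using Suc.hyps by (cases m) auto
  let ?A = "Qup i p"
  have h1: "GLP (Imp (Box 0 (Qi i p)) (Box 0 (Qi (Suc i) p)))"
    by (rule box_mono[OF L1])
  have h2: "GLP (Imp (Box 0 (Qi (Suc i) p)) (Box 0 (Imp (Qi m ?A) (Qi m p))))"
    by (rule box_mono[OF Suc.IH])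
  have h3: "GLP (Imp (Box 0 (Imp (Qi m ?A) (Qi m p))) (Imp (Box 0 (Qi m ?A)) (Box 0 (Qi m p))))"
    by (rule GLP.K)
  show ?case
    by (rule taut_consL[of "[Imp (Box 0 (Qi i p)) (Box 0 (Qi (Suc i) p)),
        Imp (Box 0 (Qi (Suc i) p)) (Box 0 (Imp (Qi m ?A) (Qi m p))),
        Imp (Box 0 (Imp (Qi m ?A) (Qi m p))) (Imp (Box 0 (Qi m ?A)) (Box 0 (Qi m p)))]"])
       (use h1 h2 h3 T1[of i _ p] assms(1) i' m' in auto)
qed

lemma negbox_Qup: "GLP (Imp (Neg (Box 0 (Qi n p))) (Qup n p))"
proof (induction n)
  case 0 then show ?case by (intro taut_consL[of "[]"]) auto
next
  case (Suc n)
  have h: "GLP (Imp (Box 0 (Qi n p)) (Box 0 (Qi (Suc n) p)))" by (rule box_mono[OF L1])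
  show ?case
    by (rule taut_consL[of "[Imp (Neg (Box 0 (Qi n p))) (Qup n p),
         Imp (Box 0 (Qi n p)) (Box 0 (Qi (Suc n) p))]"]) (use Suc h in auto)
qed

lemma main_equiv:
  assumes "1 \<le> i" "i \<le> j"
  shows "GLP (Iff (Qup i p) (Qup j (Qup i p)))"
proof -
  let ?A = "Qup i p"
  have pA: "GLP (Imp p ?A)" by (rule taut_consL[of "[]"]) (auto intro: Qup_L0)
  have h1: "GLP (Imp (Box 0 (Qi i p)) (Box 0 (Qi i ?A)))" by (rule box_mono[OF L2[OF pA]])
  have h2: "GLP (Imp (Neg (Box 0 (Qi i p))) ?A)" by (rule negbox_Qup)
  show ?thesis
  proof (rule taut_consL[of "[Imp (Box 0 (Qi i p)) (Box 0 (Qi i ?A)), Imp (Neg (Box 0 (Qi i p))) ?A]"])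
    show "\<forall>h\<in>set [Imp (Box 0 (Qi i p)) (Box 0 (Qi i ?A)), Imp (Neg (Box 0 (Qi i p))) ?A]. GLP h"
      using h1 h2 by auto
  next
    fix v assume hv: "\<forall>h\<in>set [Imp (Box 0 (Qi i p)) (Box 0 (Qi i ?A)), Imp (Neg (Box 0 (Qi i p))) ?A]. peval v h"
    show "peval v (Iff ?A (Qup j ?A))"
    proof (cases "peval v ?A")
      case True then show ?thesis by (simp add: Qup_L0)
    next
      case False
      then have "v (Box 0 (Qi i p))" using hv by auto
      then have "v (Box 0 (Qi i ?A))" using hv by auto
      then have "\<not> peval v (Qup i ?A)" using T1[of i v ?A] False assms(1) by auto
      then have "\<not> peval v (Qup j ?A)" using Qup_prefix[OF assms(2)] by blast
      then show ?thesis using False by simp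
    qed
  qed
qed


fun sat :: "(nat \<Rightarrow> nat \<Rightarrow> bool) \<Rightarrow> nat \<Rightarrow> form \<Rightarrow> bool" where
  "sat V w (Var n) = V n w"
| "sat V w Bot = False"
| "sat V w (Imp a b) = (sat V w a \<longrightarrow> sat V w b)"
| "sat V w (Box k a) = (k = 0 \<longrightarrow> (\<forall>u<w. sat V u a))"

lemma sat_simps[simp]:
  "sat V w (Neg a) = (\<not> sat V w a)"
  "sat V w Top = True"
  "sat V w (Or a b) = (sat V w a \<or> sat V w b)"
  "sat V w (And a b) = (sat V w a \<and> sat V w b)"
  "sat V w (Iff a b) = (sat V w a = sat V w b)"
  "sat V w (Dia k a) = (k = 0 \<and> (\<exists>u<w. sat V u a))"
  by (auto simp: Neg_def Top_def Or_def And_def Iff_def Dia_def)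

lemma peval_sat: "peval (\<lambda>f. sat V w f) a = sat V w a"
  by (induction a) auto

lemma soundness: "GLP a \<Longrightarrow> \<forall>w. sat V w a"
proof (induction rule: GLP.induct)
  case (tautology a)
  then show ?case using peval_sat[of V] by (auto simp: taut_def)
next
  case (Loeb k a)
  show ?case
  proof (cases "k = 0")
    case True
    have "sat V w (Box k a)" if h: "sat V w (Box k (Imp (Box k a) a))" for w
    proof -
      have "sat V u a" if "u < w" for u
        using that
      proof (induction u rule: less_induct)
        case (less u) then show ?case using h True by auto
      qed
      then show ?thesis by auto
    qed
    then show ?thesis unfolding sat.simps(3) by blast
  qed simp
next
  case (K k a b) then show ?case by auto
next
  case (neg_intro j k a) then show ?case by auto
next
  case (mono j k a) then show ?case by auto
next
  case (MP a b) then show ?case by auto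
next
  case (Nec a k) then show ?case by auto
qed

lemma sat_Qi_false: "sat (\<lambda>_ _. False) w (Qi (Suc k) (Var 0)) = (w < k)"
proof (induction k arbitrary: w)
  case 0 then show ?case by simp
next
  case (Suc k)
  have "sat (\<lambda>_ _. False) w (Qi (Suc (Suc k)) (Var 0)) = (\<forall>u<w. u < k)"
    using Suc.IH by simp
  also have "\<dots> = (w < Suc k)"
    by (metis leI less_le_trans not_less_eq order_less_irrefl)
  finally show ?case .
qed

lemma sat_Qup_false: "sat (\<lambda>_ _. False) w (Qup n (Var 0)) = (n \<le> w)"
proof (induction n)
  case 0 then show ?case by simp
next
  case (Suc n)
  have "(\<forall>u<w. u < n) = (w \<le> n)"
    by (metis leI less_le_trans not_less_eq order_less_irrefl)
  then show ?case using Suc by (auto simp: sat_Qi_false)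
qed

lemma Qup_false_least:
  "\<not> sat V w (Qup n \<psi>) \<Longrightarrow> \<exists>k\<in>{1..n}. w = (LEAST u. \<not> sat V u (Qi k \<psi>))"
proof (induction n)
  case 0 then show ?case by simp
next
  case (Suc n)
  show ?case
  proof (cases "sat V w (Qup n \<psi>)")
    case False then show ?thesis using Suc.IH by force
  next
    case True
    then have a: "\<forall>u<w. sat V u (Qi (Suc n) \<psi>)" and b: "\<not> sat V w (Qi (Suc n) \<psi>)"
      using Suc.prems by auto
    have "w = (LEAST u. \<not> sat V u (Qi (Suc n) \<psi>))"
      by (rule Least_equality[symmetric]) (use a b in \<open>auto simp: not_less[symmetric]\<close>)
    then show ?thesis by force
  qed
qed

lemma subst_Qi: "subst_app \<theta> (Qi k p) = Qi k (subst_app \<theta> p)"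
  by (induction k p rule: Qi.induct) (simp_all add: Or_def Neg_def)

lemma subst_Qup: "subst_app \<theta> (Qup n p) = Qup n (subst_app \<theta> p)"
  by (induction n) (simp_all add: And_def Neg_def Top_def subst_Qi)

theorem mainTheorem14:
  fixes i j :: nat
  assumes "0 < i" and "i < j"
  shows "subst_less (Qsubst i) (Qsubst j)"
  unfolding subst_less_def
proof
  define \<theta> where "\<theta> = (\<lambda>q. if q = 0 then Qup i (Var 0) else Var q)"
  have "GLP (Iff (Qsubst i q) (subst_app \<theta> (Qsubst j q)))" for q
  proof (cases "q = 0")
    case True
    have e: "subst_app \<theta> (Qsubst j q) = Qup j (Qup i (Var 0))"
      using True by (simp add: Qsubst_def subst_Qup \<theta>_def)
    have "Qsubst i q = Qup i (Var 0)" using True by (simp add: Qsubst_def)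
    then show ?thesis using main_equiv[of i j "Var 0"] assms e by simp
  next
    case False
    then have "Qsubst i q = Var q" "subst_app \<theta> (Qsubst j q) = Var q"
      by (simp_all add: Qsubst_def \<theta>_def)
    moreover have "GLP (Iff (Var q) (Var q))"
      by (rule taut_consL[of "[]"]) auto
    ultimately show ?thesis by simp
  qed
  then show "subst_le (Qsubst i) (Qsubst j)" unfolding subst_le_def by blast
next
  show "\<not> subst_le (Qsubst j) (Qsubst i)"
  proof
    assume "subst_le (Qsubst j) (Qsubst i)"
    then obtain \<theta> where "GLP (Iff (Qsubst j 0) (subst_app \<theta> (Qsubst i 0)))"
      unfolding subst_le_def by blast
    then have g: "GLP (Iff (Qup j (Var 0)) (Qup i (\<theta> 0)))"
      by (simp add: Qsubst_def subst_Qup)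
    define V where "V = (\<lambda>(_::nat) (_::nat). False)"
    define f where "f = (\<lambda>k. LEAST u. \<not> sat V u (Qi k (\<theta> 0)))"
    have "{..<j} \<subseteq> f ` {1..i}"
    proof
      fix w assume "w \<in> {..<j}"
      then have "\<not> sat V w (Qup j (Var 0))" using sat_Qup_false[of w j] by (simp add: V_def)
      moreover have "sat V w (Iff (Qup j (Var 0)) (Qup i (\<theta> 0)))" using soundness[OF g] by blast
      ultimately have "\<not> sat V w (Qup i (\<theta> 0))" by simp
      then obtain k where "k \<in> {1..i}" "w = f k" using Qup_false_least[of V w i "\<theta> 0"] f_def by blast
      then show "w \<in> f ` {1..i}" by blast
    qed
    then have "card {..<j} \<le> card (f ` {1..i})" by (intro card_mono) auto
    also have "\<dots> \<le> card {1..i}" by (rule card_image_le) auto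
    finally show False using assms by simp
  qed
qed

end
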